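(* Let $A\subseteq\mathbb{N}$ and $B,C\in\mathcal{D}$ with $A\cup B\supseteq C$. Then $d(C)-d(B)\le\underline{\underline{d}}(A)$.
   Context: $\mathbb{N}=\{1,2,3,\dots\}$. For $A\subseteq\mathbb{N}$ let $A(n)=|A\cap[1,n]|$. Let $\mathcal{D}$ be the collection of all $A\subseteq\mathbb{N}$ for which the asymptotic density $d(A)=\lim_{n\to\infty}\frac{A(n)}{n}$ exists. Define $\underline{\underline{d}}(A)=\sup\{d(B);\ B\subseteq A,\ B\in\mathcal{D}\}$. *)

theory Defs
  imports "HOL-Analysis.Analysis"
begin

text \<open>Subsets of the positive integers are modelled as sets of naturals not containing 0.\<close>

definition counting :: "nat set \<Rightarrow> nat \<Rightarrow> nat" where
  "counting A n = card (A \<inter> {1..n})"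

definition has_density :: "nat set \<Rightarrow> real \<Rightarrow> bool" where
  "has_density A \<delta> \<longleftrightarrow> ((\<lambda>n. real (counting A n) / real n) \<longlonglongrightarrow> \<delta>)"

definition density_sets :: "nat set set" where
  "density_sets = {A. A \<subseteq> {1..} \<and> (\<exists>\<delta>. has_density A \<delta>)}"

definition density :: "nat set \<Rightarrow> real" where
  "density A = lim (\<lambda>n. real (counting A n) / real n)"

definition inner_density :: "nat set \<Rightarrow> real" where
  "inner_density A = Sup {density B | B. B \<subseteq> A \<and> B \<in> density_sets}"

end

theory Submission
  imports Defs
begin

lemma counting_split:
  assumes "k \<le> n"
  shows "counting X n = counting X k + card (X \<inter> {k<..n})"
proof -
  have "X \<inter> {1..n} = (X \<inter> {1..k}) \<union> (X \<inter> {k<..n})" using assms by auto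
  moreover have "(X \<inter> {1..k}) \<inter> (X \<inter> {k<..n}) = {}" by auto
  ultimately show ?thesis unfolding counting_def
    by (simp add: card_Un_disjoint)
qed

lemma counting_Suc:
  "counting X (Suc n) = counting X n + (if Suc n \<in> X then 1 else 0)"
proof -
  have "{n<..Suc n} = {Suc n}" by auto
  then have "X \<inter> {n<..Suc n} = (if Suc n \<in> X then {Suc n} else {})" by auto
  then show ?thesis using counting_split[of n "Suc n" X] by auto
qed

lemma counting_le: "counting X n \<le> n"
proof -
  have "card (X \<inter> {1..n}) \<le> card {1..n}" by (rule card_mono) auto
  then show ?thesis unfolding counting_def by simp
qed

lemma density_approx:
  assumes "has_density C c" "\<epsilon> > 0"
  shows "\<exists>K. \<forall>n. \<bar>real (counting C n) - c * real n\<bar> \<le> \<epsilon> * real n + K"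
proof -
  from assms obtain N where N: "\<forall>n\<ge>N. norm (real (counting C n) / real n - c) < \<epsilon>"
    unfolding has_density_def LIMSEQ_def dist_real_def by auto
  show ?thesis
  proof (intro exI allI)
    fix n
    show "\<bar>real (counting C n) - c * real n\<bar> \<le> \<epsilon> * real n + real N * (1 + \<bar>c\<bar>)"
    proof (cases "n \<ge> N \<and> n \<ge> 1")
      case True
      then have "\<bar>real (counting C n) / real n - c\<bar> < \<epsilon>" using N by auto
      then have "\<bar>(real (counting C n) - c * real n) / real n\<bar> < \<epsilon>"
        using True by (simp add: field_simps)
      then have "\<bar>real (counting C n) - c * real n\<bar> < \<epsilon> * real n"
        using True by (simp add: abs_divide field_simps)
      moreover have "0 \<le> real N * (1 + \<bar>c\<bar>)" by simp
      ultimately show ?thesis by linarith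
    next
      case False
      then have nN: "real n \<le> real N" by auto
      have "real (counting C n) \<le> real n" using counting_le by simp
      have t: "\<bar>real (counting C n) - c * real n\<bar> \<le> \<bar>real (counting C n)\<bar> + \<bar>c * real n\<bar>"
        by (rule abs_triangle_ineq4)
      have "\<bar>c * real n\<bar> = \<bar>c\<bar> * real n" by (simp add: abs_mult)
      then have "\<bar>real (counting C n) - c * real n\<bar> \<le> real n + \<bar>c\<bar> * real n"
        using t \<open>real (counting C n) \<le> real n\<close> by simp
      also have "\<dots> \<le> real N * (1 + \<bar>c\<bar>)"
      proof -
        have "\<bar>c\<bar> * real n \<le> \<bar>c\<bar> * real N" using nN by (simp add: mult_left_mono)
        then show ?thesis using nN by (simp add: algebra_simps)
      qed
      moreover have "0 \<le> \<epsilon> * real n" using assms(2) by simp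
      ultimately show ?thesis by linarith
    qed
  qed
qed

fun ecount :: "real \<Rightarrow> nat set \<Rightarrow> nat \<Rightarrow> nat" where
  "ecount d D 0 = 0"
| "ecount d D (Suc n) = min (nat \<lfloor>d * real (Suc n)\<rfloor>) (ecount d D n + (if Suc n \<in> D then 1 else 0))"

lemma ecount_le: "ecount d D n \<le> nat \<lfloor>d * real n\<rfloor>"
  by (cases n) auto

lemma ecount_mono_step:
  assumes "d \<ge> 0"
  shows "ecount d D n \<le> ecount d D (Suc n)"
proof -
  have "nat \<lfloor>d * real n\<rfloor> \<le> nat \<lfloor>d * real (Suc n)\<rfloor>"
    using assms by (intro nat_mono floor_mono mult_left_mono) auto
  then show ?thesis using ecount_le[of d D n] by simp
qed

definition eset :: "real \<Rightarrow> nat set \<Rightarrow> nat set" where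
  "eset d D = {m. \<exists>n. m = Suc n \<and> ecount d D (Suc n) = Suc (ecount d D n)}"

lemma eset_sub: "eset d D \<subseteq> D"
proof
  fix m assume "m \<in> eset d D"
  then obtain n where "m = Suc n" "ecount d D (Suc n) = Suc (ecount d D n)"
    unfolding eset_def by auto
  then show "m \<in> D" by (auto split: if_splits)
qed

lemma eset_pos: "eset d D \<subseteq> {1..}"
  unfolding eset_def by auto

lemma counting_eset:
  assumes "d \<ge> 0"
  shows "counting (eset d D) n = ecount d D n"
proof (induction n)
  case 0 then show ?case by (simp add: counting_def)
next
  case (Suc n)
  have "Suc n \<in> eset d D \<longleftrightarrow> ecount d D (Suc n) = Suc (ecount d D n)"
    unfolding eset_def by auto
  moreover have "ecount d D (Suc n) \<le> Suc (ecount d D n)" by (simp add: min_def)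
  moreover note ecount_mono_step[OF assms, of D n]
  ultimately show ?case using Suc counting_Suc[of "eset d D" n] by auto
qed

lemma ecount_lower:
  "\<exists>k\<le>n. real (ecount d D n) \<ge> d * real k - 1 + real (counting D n) - real (counting D k)"
proof (induction n)
  case 0 then show ?case by simp
next
  case (Suc n)
  then obtain k where k: "k \<le> n"
    "real (ecount d D n) \<ge> d * real k - 1 + real (counting D n) - real (counting D k)" by auto
  show ?case
  proof (cases "ecount d D (Suc n) = nat \<lfloor>d * real (Suc n)\<rfloor>")
    case True
    have f1: "real_of_int \<lfloor>d * real (Suc n)\<rfloor> > d * real (Suc n) - 1"
      using real_of_int_floor_add_one_gt[of "d * real (Suc n)"] by linarith
    have f2: "real (nat \<lfloor>d * real (Suc n)\<rfloor>) \<ge> real_of_int \<lfloor>d * real (Suc n)\<rfloor>"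
      by (cases "\<lfloor>d * real (Suc n)\<rfloor> \<ge> 0") auto
    have "real (nat \<lfloor>d * real (Suc n)\<rfloor>) \<ge> d * real (Suc n) - 1" using f1 f2 by linarith
    then show ?thesis using True by (intro exI[of _ "Suc n"]) auto
  next
    case False
    then have "ecount d D (Suc n) = ecount d D n + (if Suc n \<in> D then 1 else 0)"
      by (simp add: min_def split: if_splits)
    then show ?thesis using k counting_Suc[of D n]
      by (intro exI[of _ k]) (auto split: if_splits)
  qed
qed

lemma construct:
  assumes d: "d \<ge> 0"
    and inc: "\<And>\<epsilon>. \<epsilon> > 0 \<Longrightarrow> \<exists>K. \<forall>n k. k \<le> n \<longrightarrow>
        real (counting D n) - real (counting D k) \<ge> d * (real n - real k) - \<epsilon> * real n - K"
  shows "has_density (eset d D) d"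
  unfolding has_density_def
proof (rule LIMSEQ_I)
  fix r :: real assume r: "r > 0"
  obtain K where K: "\<forall>n k. k \<le> n \<longrightarrow>
        real (counting D n) - real (counting D k) \<ge> d * (real n - real k) - (r/2) * real n - K"
    using inc[of "r/2"] r by auto
  obtain N :: nat where N: "real N > 2 * (1 + \<bar>K\<bar>) / r" using reals_Archimedean2 by blast
  show "\<exists>no. \<forall>n\<ge>no. norm (real (counting (eset d D) n) / real n - d) < r"
  proof (intro exI allI impI)
    fix n assume nN: "n \<ge> Suc N"
    have npos: "real n > 0" using nN by simp
    have nbig: "real n * r > 2 * (1 + \<bar>K\<bar>)"
    proof -
      have "real n > 2 * (1 + \<bar>K\<bar>) / r" using N nN by linarith
      then show ?thesis using r by (simp add: field_simps)
    qed
    let ?e = "real (ecount d D n)"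
    have fz: "0 \<le> \<lfloor>d * real n\<rfloor>" using d by simp
    have "real (nat \<lfloor>d * real n\<rfloor>) = real_of_int \<lfloor>d * real n\<rfloor>" using fz by simp
    also have "\<dots> \<le> d * real n" by (rule of_int_floor_le)
    finally have "real (nat \<lfloor>d * real n\<rfloor>) \<le> d * real n" .
    moreover have "?e \<le> real (nat \<lfloor>d * real n\<rfloor>)" using ecount_le[of d D n] by linarith
    ultimately have up: "?e \<le> d * real n" by linarith
    obtain k where k: "k \<le> n" "?e \<ge> d * real k - 1 + real (counting D n) - real (counting D k)"
      using ecount_lower by blast
    have kk: "real (counting D n) - real (counting D k) \<ge> d * (real n - real k) - (r/2) * real n - K"
      using K k(1) by blast
    have "d * (real n - real k) = d * real n - d * real k" by (simp add: algebra_simps)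
    then have "?e \<ge> d * real n - (r/2) * real n - K - 1"
      using k(2) kk by linarith
    moreover have "(r/2) * real n = (real n * r) / 2" by simp
    moreover have "K \<le> \<bar>K\<bar>" by simp
    ultimately have lo: "?e > d * real n - r * real n" using nbig by (simp add: algebra_simps)
    have "0 < r * real n" using r npos by simp
    then have "\<bar>?e - d * real n\<bar> < r * real n" using up lo
      by (simp add: abs_less_iff)
    then have "\<bar>(?e - d * real n) / real n\<bar> < r"
      using npos by (simp add: abs_divide field_simps)
    then show "norm (real (counting (eset d D) n) / real n - d) < r"
      using npos counting_eset[OF d] by (simp add: field_simps)
  qed
qed

lemma density_le1:
  assumes "B \<in> density_sets" shows "density B \<le> 1"
proof -
  from assms obtain \<delta> where h: "has_density B \<delta>" unfolding density_sets_def by auto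
  then have L: "(\<lambda>n. real (counting B n) / real n) \<longlonglongrightarrow> \<delta>" unfolding has_density_def .
  have "\<delta> \<le> 1"
    by (rule LIMSEQ_le_const2[OF L]) (auto intro!: exI[of _ 0] simp: counting_le divide_le_eq_1)
  moreover have "density B = \<delta>" unfolding density_def using L by (rule limI)
  ultimately show ?thesis by simp
qed

lemma inner_ge:
  assumes "E \<subseteq> A" "E \<in> density_sets"
  shows "density E \<le> inner_density A"
  unfolding inner_density_def
proof (rule cSup_upper)
  show "density E \<in> {density B |B. B \<subseteq> A \<and> B \<in> density_sets}" using assms by auto
  show "bdd_above {density B |B. B \<subseteq> A \<and> B \<in> density_sets}"
    by (rule bdd_aboveI[of _ 1]) (auto simp: density_le1)
qed

theorem lemma3p10:
  fixes A B C :: "nat set"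
  assumes "A \<subseteq> {1..}"
    and "B \<in> density_sets" and "C \<in> density_sets"
    and "C \<subseteq> A \<union> B"
  shows "density C - density B \<le> inner_density A"
proof -
  obtain b where hb: "has_density B b" using assms(2) unfolding density_sets_def by auto
  obtain c where hc: "has_density C c" using assms(3) unfolding density_sets_def by auto
  have db: "density B = b" unfolding density_def using hb unfolding has_density_def by (rule limI)
  have dc: "density C = c" unfolding density_def using hc unfolding has_density_def by (rule limI)
  define D where "D = C - B"
  define d where "d = max (c - b) 0"
  have DA: "D \<subseteq> A" using assms(4) unfolding D_def by auto
  have inc: "\<exists>K. \<forall>n k. k \<le> n \<longrightarrow>
        real (counting D n) - real (counting D k) \<ge> d * (real n - real k) - \<epsilon> * real n - K"
    if e: "\<epsilon> > 0" for \<epsilon>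
  proof -
    obtain K1 where K1: "\<forall>n. \<bar>real (counting C n) - c * real n\<bar> \<le> (\<epsilon>/4) * real n + K1"
      using density_approx[OF hc, of "\<epsilon>/4"] e by auto
    obtain K2 where K2: "\<forall>n. \<bar>real (counting B n) - b * real n\<bar> \<le> (\<epsilon>/4) * real n + K2"
      using density_approx[OF hb, of "\<epsilon>/4"] e by auto
    show ?thesis
    proof (intro exI[of _ "2*K1 + 2*K2"] allI impI)
      fix n k :: nat assume kn: "k \<le> n"
      let ?I = "{k<..n}"
      have "card (C \<inter> ?I) \<le> card ((D \<inter> ?I) \<union> (B \<inter> ?I))"
        by (rule card_mono) (auto simp: D_def)
      also have "\<dots> \<le> card (D \<inter> ?I) + card (B \<inter> ?I)" by (rule card_Un_le)
      finally have cI: "card (C \<inter> ?I) \<le> card (D \<inter> ?I) + card (B \<inter> ?I)" .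
      have eqs: "real (counting D n) - real (counting D k) = real (card (D \<inter> ?I))"
        "real (counting C n) - real (counting C k) = real (card (C \<inter> ?I))"
        "real (counting B n) - real (counting B k) = real (card (B \<inter> ?I))"
        using counting_split[OF kn] by auto
      have rk: "real k \<le> real n" using kn by simp
      have nn: "0 \<le> real (card (D \<inter> ?I))" by simp
      have main: "real (card (D \<inter> ?I)) \<ge> (c - b) * (real n - real k) - \<epsilon> * real n - (2*K1 + 2*K2)"
      proof -
        have "real (card (C \<inter> ?I)) \<le> real (card (D \<inter> ?I)) + real (card (B \<inter> ?I))"
          using cI by linarith
        moreover have "real (card (C \<inter> ?I)) \<ge> c * real n - c * real k - (\<epsilon>/4) * real n - (\<epsilon>/4) * real k - 2*K1"
          using K1[rule_format, of n] K1[rule_format, of k] eqs(2) by linarith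
        moreover have "real (card (B \<inter> ?I)) \<le> b * real n - b * real k + (\<epsilon>/4) * real n + (\<epsilon>/4) * real k + 2*K2"
          using K2[rule_format, of n] K2[rule_format, of k] eqs(3) by linarith
        moreover have "(\<epsilon>/4) * real k \<le> (\<epsilon>/4) * real n" using rk e by simp
        moreover have "(c - b) * (real n - real k) = c * real n - c * real k - b * real n + b * real k"
          by (simp add: algebra_simps)
        ultimately show ?thesis by linarith
      qed
      have Kpos: "0 \<le> 2*K1 + 2*K2"
        using K1[rule_format, of 0] K2[rule_format, of 0] by simp
      show "real (counting D n) - real (counting D k) \<ge> d * (real n - real k) - \<epsilon> * real n - (2*K1 + 2*K2)"
      proof (cases "c - b \<ge> 0")
        case True then show ?thesis using main eqs(1) by (simp add: d_def)
      next
        case False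
        then have "d = 0" by (simp add: d_def)
        moreover have "0 \<le> \<epsilon> * real n" using e by simp
        ultimately show ?thesis using eqs(1) nn Kpos by simp
      qed
    qed
  qed
  have dpos: "d \<ge> 0" by (simp add: d_def)
  have hE: "has_density (eset d D) d" by (rule construct[OF dpos inc])
  have Eds: "eset d D \<in> density_sets"
    using hE eset_pos unfolding density_sets_def by auto
  have dE: "density (eset d D) = d" unfolding density_def using hE unfolding has_density_def by (rule limI)
  have "eset d D \<subseteq> A" using eset_sub DA by blast
  from inner_ge[OF this Eds] dE have "d \<le> inner_density A" by simp
  then show ?thesis using db dc by (simp add: d_def)
qed

end
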